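(* The two morphisms \[\mathbb{P}^1\times\mathbb{P}^1 \to \mathbb{P}^3,\quad [x_0:x_1]\times[y_0:y_1] \mapsto [x_0y_0^2 : x_1y_0^2 + 2x_0y_0y_1 : 2x_1y_0y_1 + x_0y_1^2 : x_1y_1^2],\] and \[\mathbb{P}^2\times\mathbb{P}^2 \to \mathbb{P}^8,\quad [x_0:x_1:x_2]\times[y_0:y_1:y_2] \mapsto [x_0y_0^2 : x_1y_1^2 : x_2y_2^2 : x_0y_1^2 + 2x_1y_0y_1 : x_1y_2^2 + 2x_2y_1y_2 : x_2y_0^2 + 2x_0y_0y_2 : 2x_0y_1y_2 + 2x_1y_0y_2 + 2x_2y_0y_1 : x_1y_0^2 - x_2y_1^2 + 2x_0y_0y_1 - 2x_1y_1y_2 : x_1y_0^2 - x_0y_2^2 + 2x_0y_0y_1 - 2x_2y_0y_2]\] are injective. In particular, $\operatorname{injdim}(\mathbb{P}^1\times\mathbb{P}^1,\mathcal{O}(1,2)) = 3$ and $\operatorname{injdim}(\mathbb{P}^2\times\mathbb{P}^2,\mathcal{O}(1,2)) \leq 8$.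
   Context: Over $\mathbb{C}$. For a line bundle $\mathscr{L}$ on a projective variety $X$ and a nonzero subspace $V \subseteq H^0(X,\mathscr{L})$, $\varphi_V \colon X \dashrightarrow \mathbb{P}(V^* )$ is the rational map given by the sections in $V$; $\operatorname{injdim}(X,\mathscr{L}) := \inf\{\dim V - 1 : \varphi_V \text{ is an injective morphism}\}$. *)

theory Defs
  imports Complex_Main
begin

text \<open>Homogeneous coordinates of points of P^n: vectors nat => complex supported on {0..n}.\<close>
definition cvec :: "nat \<Rightarrow> (nat \<Rightarrow> complex) set" where
  "cvec n = {x. (\<forall>i>n. x i = 0) \<and> x \<noteq> (\<lambda>_. 0)}"

definition proj_eq :: "(nat \<Rightarrow> complex) \<Rightarrow> (nat \<Rightarrow> complex) \<Rightarrow> bool" where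
  "proj_eq x x' \<longleftrightarrow> (\<exists>c. c \<noteq> 0 \<and> x' = (\<lambda>i. c * x i))"

text \<open>A global section of O(1,2) on P^n x P^n: a bihomogeneous form of bidegree (1,2)
  (linear in x, quadratic in y), viewed as a polynomial function.\<close>
definition form12 :: "nat \<Rightarrow> ((nat \<Rightarrow> complex) \<Rightarrow> (nat \<Rightarrow> complex) \<Rightarrow> complex) \<Rightarrow> bool" where
  "form12 n f \<longleftrightarrow> (\<exists>c. \<forall>x y. f x y =
      (\<Sum>i\<le>n. \<Sum>j\<le>n. \<Sum>k\<le>n. c i j k * x i * y j * y k))"

text \<open>The forms F 0, ..., F d define an injective morphism P^n x P^n -> P^d:
  no common zero (so the map is a morphism) and injective on projective points.\<close>
definition inj_morphism ::
  "nat \<Rightarrow> nat \<Rightarrow> (nat \<Rightarrow> (nat \<Rightarrow> complex) \<Rightarrow> (nat \<Rightarrow> complex) \<Rightarrow> complex) \<Rightarrow> bool" where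
  "inj_morphism n d F \<longleftrightarrow>
     (\<forall>x\<in>cvec n. \<forall>y\<in>cvec n. \<exists>i\<le>d. F i x y \<noteq> 0) \<and>
     (\<forall>x\<in>cvec n. \<forall>y\<in>cvec n. \<forall>x'\<in>cvec n. \<forall>y'\<in>cvec n.
        (\<exists>c. c \<noteq> 0 \<and> (\<forall>i\<le>d. F i x' y' = c * F i x y)) \<longrightarrow> proj_eq x x' \<and> proj_eq y y')"

definition lin_indep_forms ::
  "nat \<Rightarrow> (nat \<Rightarrow> (nat \<Rightarrow> complex) \<Rightarrow> (nat \<Rightarrow> complex) \<Rightarrow> complex) \<Rightarrow> bool" where
  "lin_indep_forms d F \<longleftrightarrow>
     (\<forall>a. (\<forall>x y. (\<Sum>i\<le>d. a i * F i x y) = 0) \<longrightarrow> (\<forall>i\<le>d. a i = 0))"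

text \<open>injdim(P^n x P^n, O(1,2)): the least dim V - 1 over subspaces V of H^0(O(1,2))
  with phi_V an injective morphism; V is given by a basis F 0, ..., F d.\<close>
definition injdim_O12 :: "nat \<Rightarrow> nat" where
  "injdim_O12 n = Inf {d. \<exists>F. (\<forall>i\<le>d. form12 n (F i)) \<and> lin_indep_forms d F \<and> inj_morphism n d F}"

definition mapP1 :: "nat \<Rightarrow> (nat \<Rightarrow> complex) \<Rightarrow> (nat \<Rightarrow> complex) \<Rightarrow> complex" where
  "mapP1 i x y = [x 0 * y 0 ^ 2,
                  x 1 * y 0 ^ 2 + 2 * x 0 * y 0 * y 1,
                  2 * x 1 * y 0 * y 1 + x 0 * y 1 ^ 2,
                  x 1 * y 1 ^ 2] ! i"

definition mapP2 :: "nat \<Rightarrow> (nat \<Rightarrow> complex) \<Rightarrow> (nat \<Rightarrow> complex) \<Rightarrow> complex" where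
  "mapP2 i x y = [x 0 * y 0 ^ 2,
                  x 1 * y 1 ^ 2,
                  x 2 * y 2 ^ 2,
                  x 0 * y 1 ^ 2 + 2 * x 1 * y 0 * y 1,
                  x 1 * y 2 ^ 2 + 2 * x 2 * y 1 * y 2,
                  x 2 * y 0 ^ 2 + 2 * x 0 * y 0 * y 2,
                  2 * x 0 * y 1 * y 2 + 2 * x 1 * y 0 * y 2 + 2 * x 2 * y 0 * y 1,
                  x 1 * y 0 ^ 2 - x 2 * y 1 ^ 2 + 2 * x 0 * y 0 * y 1 - 2 * x 1 * y 1 * y 2,
                  x 1 * y 0 ^ 2 - x 0 * y 2 ^ 2 + 2 * x 0 * y 0 * y 1 - 2 * x 2 * y 0 * y 2] ! i"

end

theory Submission
  imports Defs
begin

lemma dep2_1: fixes a b :: complex shows "\<exists>p q. (p \<noteq> 0 \<or> q \<noteq> 0) \<and> p*a + q*b = 0"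
proof (cases "a = 0")
  case True then show ?thesis by (rule_tac x=1 in exI, rule_tac x=0 in exI) simp
next
  case False then show ?thesis by (rule_tac x=b in exI, rule_tac x="-a" in exI) (simp add: mult.commute)
qed

lemma dep3_2_piv: fixes a0 a1 b0 b1 c0 c1 :: complex assumes "a0 \<noteq> 0"
  shows "\<exists>p q r. (p\<noteq>0 \<or> q\<noteq>0 \<or> r\<noteq>0) \<and> p*a0+q*b0+r*c0 = 0 \<and> p*a1+q*b1+r*c1 = 0"
proof -
  obtain q r where qr: "q\<noteq>0 \<or> r\<noteq>0" "q*(b1 - b0/a0*a1) + r*(c1 - c0/a0*a1) = 0"
    using dep2_1 by blast
  show ?thesis
  proof (rule exI[of _ "-(q*b0+r*c0)/a0"], rule exI[of _ q], rule exI[of _ r], intro conjI)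
    show "-(q*b0+r*c0)/a0\<noteq>0 \<or> q\<noteq>0 \<or> r\<noteq>0" using qr by blast
    show "-(q*b0+r*c0)/a0*a0+q*b0+r*c0 = 0" using assms by simp
    have "-(q*b0+r*c0)/a0*a1+q*b1+r*c1 = q*(b1 - b0/a0*a1) + r*(c1 - c0/a0*a1)"
      using assms by (simp add: field_simps)
    then show "-(q*b0+r*c0)/a0*a1+q*b1+r*c1 = 0" using qr by simp
  qed
qed

lemma dep3_2: fixes a0 a1 b0 b1 c0 c1 :: complex
  shows "\<exists>p q r. (p\<noteq>0 \<or> q\<noteq>0 \<or> r\<noteq>0) \<and> p*a0+q*b0+r*c0 = 0 \<and> p*a1+q*b1+r*c1 = 0"
proof -
  consider "a0 \<noteq> 0" | "b0 \<noteq> 0" | "c0 \<noteq> 0" | "a0 = 0 \<and> b0 = 0 \<and> c0 = 0" by blast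
  then show ?thesis
  proof cases
    case 1 then show ?thesis using dep3_2_piv by blast
  next
    case 2 then obtain q p r where "(q\<noteq>0 \<or> p\<noteq>0 \<or> r\<noteq>0) \<and> q*b0+p*a0+r*c0 = 0 \<and> q*b1+p*a1+r*c1 = 0"
      using dep3_2_piv by blast
    then show ?thesis by (rule_tac x=p in exI, rule_tac x=q in exI, rule_tac x=r in exI) (auto simp: algebra_simps)
  next
    case 3 then obtain r p q where "(r\<noteq>0 \<or> p\<noteq>0 \<or> q\<noteq>0) \<and> r*c0+p*a0+q*b0 = 0 \<and> r*c1+p*a1+q*b1 = 0"
      using dep3_2_piv by blast
    then show ?thesis by (rule_tac x=p in exI, rule_tac x=q in exI, rule_tac x=r in exI) (auto simp: algebra_simps)
  next
    case 4 then obtain p q where "(p \<noteq> 0 \<or> q \<noteq> 0) \<and> p*a1 + q*b1 = 0" using dep2_1 by blast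
    then show ?thesis using 4 by (rule_tac x=p in exI, rule_tac x=q in exI, rule_tac x=0 in exI) auto
  qed
qed

lemma dep4_3_piv: fixes a0 a1 a2 b0 b1 b2 c0 c1 c2 d0 d1 d2 :: complex assumes "a0 \<noteq> 0"
  shows "\<exists>p q r s. (p\<noteq>0 \<or> q\<noteq>0 \<or> r\<noteq>0 \<or> s\<noteq>0) \<and> p*a0+q*b0+r*c0+s*d0 = 0 \<and>
     p*a1+q*b1+r*c1+s*d1 = 0 \<and> p*a2+q*b2+r*c2+s*d2 = 0"
proof -
  obtain q r s where qr: "q\<noteq>0 \<or> r\<noteq>0 \<or> s\<noteq>0"
    "q*(b1 - b0/a0*a1) + r*(c1 - c0/a0*a1) + s*(d1 - d0/a0*a1) = 0"
    "q*(b2 - b0/a0*a2) + r*(c2 - c0/a0*a2) + s*(d2 - d0/a0*a2) = 0"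
    using dep3_2 by blast
  show ?thesis
  proof (rule exI[of _ "-(q*b0+r*c0+s*d0)/a0"], rule exI[of _ q], rule exI[of _ r], rule exI[of _ s], intro conjI)
    show "-(q*b0+r*c0+s*d0)/a0\<noteq>0 \<or> q\<noteq>0 \<or> r\<noteq>0 \<or> s\<noteq>0" using qr by blast
    show "-(q*b0+r*c0+s*d0)/a0*a0+q*b0+r*c0+s*d0 = 0" using assms by simp
    have "-(q*b0+r*c0+s*d0)/a0*a1+q*b1+r*c1+s*d1 = q*(b1 - b0/a0*a1) + r*(c1 - c0/a0*a1) + s*(d1 - d0/a0*a1)"
      using assms by (simp add: field_simps)
    then show "-(q*b0+r*c0+s*d0)/a0*a1+q*b1+r*c1+s*d1 = 0" using qr by simp
    have "-(q*b0+r*c0+s*d0)/a0*a2+q*b2+r*c2+s*d2 = q*(b2 - b0/a0*a2) + r*(c2 - c0/a0*a2) + s*(d2 - d0/a0*a2)"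
      using assms by (simp add: field_simps)
    then show "-(q*b0+r*c0+s*d0)/a0*a2+q*b2+r*c2+s*d2 = 0" using qr by simp
  qed
qed

lemma dep4_3: fixes a0 a1 a2 b0 b1 b2 c0 c1 c2 d0 d1 d2 :: complex
  shows "\<exists>p q r s. (p\<noteq>0 \<or> q\<noteq>0 \<or> r\<noteq>0 \<or> s\<noteq>0) \<and> p*a0+q*b0+r*c0+s*d0 = 0 \<and>
     p*a1+q*b1+r*c1+s*d1 = 0 \<and> p*a2+q*b2+r*c2+s*d2 = 0"
proof -
  consider "a0 \<noteq> 0" | "b0 \<noteq> 0" | "c0 \<noteq> 0" | "d0 \<noteq> 0" | "a0 = 0 \<and> b0 = 0 \<and> c0 = 0 \<and> d0 = 0" by blast
  then show ?thesis
  proof cases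
    case 1 then show ?thesis using dep4_3_piv by blast
  next
    case 2 then obtain q p r s where "(q\<noteq>0 \<or> p\<noteq>0 \<or> r\<noteq>0 \<or> s\<noteq>0) \<and> q*b0+p*a0+r*c0+s*d0 = 0 \<and>
     q*b1+p*a1+r*c1+s*d1 = 0 \<and> q*b2+p*a2+r*c2+s*d2 = 0"
      using dep4_3_piv by blast
    then show ?thesis by (rule_tac x=p in exI, rule_tac x=q in exI, rule_tac x=r in exI, rule_tac x=s in exI) (auto simp: algebra_simps)
  next
    case 3 then obtain r p q s where "(r\<noteq>0 \<or> p\<noteq>0 \<or> q\<noteq>0 \<or> s\<noteq>0) \<and> r*c0+p*a0+q*b0+s*d0 = 0 \<and>
     r*c1+p*a1+q*b1+s*d1 = 0 \<and> r*c2+p*a2+q*b2+s*d2 = 0"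
      using dep4_3_piv by blast
    then show ?thesis by (rule_tac x=p in exI, rule_tac x=q in exI, rule_tac x=r in exI, rule_tac x=s in exI) (auto simp: algebra_simps)
  next
    case 4 then obtain s p q r where "(s\<noteq>0 \<or> p\<noteq>0 \<or> q\<noteq>0 \<or> r\<noteq>0) \<and> s*d0+p*a0+q*b0+r*c0 = 0 \<and>
     s*d1+p*a1+q*b1+r*c1 = 0 \<and> s*d2+p*a2+q*b2+r*c2 = 0"
      using dep4_3_piv by blast
    then show ?thesis by (rule_tac x=p in exI, rule_tac x=q in exI, rule_tac x=r in exI, rule_tac x=s in exI) (auto simp: algebra_simps)
  next
    case 5 then obtain p q r where "(p\<noteq>0 \<or> q\<noteq>0 \<or> r\<noteq>0) \<and> p*a1+q*b1+r*c1 = 0 \<and> p*a2+q*b2+r*c2 = 0"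
      using dep3_2 by blast
    then show ?thesis using 5 by (rule_tac x=p in exI, rule_tac x=q in exI, rule_tac x=r in exI, rule_tac x=0 in exI) auto
  qed
qed

lemma P1_null: fixes x0 x1 y0 y1 :: complex
  assumes "x0*y0^2 = 0" "x1*y0^2 + 2*x0*y0*y1 = 0" "2*x1*y0*y1 + x0*y1^2 = 0" "x1*y1^2=0" "y0\<noteq>0 \<or> y1\<noteq>0"
  shows "x0 = 0 \<and> x1 = 0"
  using assms by auto

lemma grad_zero2: fixes x0 x1 y0 y1 p0 p1 :: complex
  assumes "m = y0*p0 + y1*p1" "l = x0*p0 + x1*p1"
    "m*(m*x0 + 2*l*y0) = 0" "m*(m*x1 + 2*l*y1) = 0" "x0 \<noteq> 0 \<or> x1 \<noteq> 0"
  shows "m = 0"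
proof (rule ccontr)
  assume m: "m \<noteq> 0"
  have e0: "m*x0 + 2*l*y0 = 0" and e1: "m*x1 + 2*l*y1 = 0" using assms m by auto
  have "3*l*m = p0*(m*x0 + 2*l*y0) + p1*(m*x1 + 2*l*y1)" using assms(1,2) by algebra
  then have "l = 0" using e0 e1 m by simp
  then show False using e0 e1 m assms(5) by simp
qed

lemma P1_main: fixes x0 x1 y0 y1 u0 u1 v0 v1 c :: complex
  assumes c: "c \<noteq> 0" and x: "x0 \<noteq> 0 \<or> x1 \<noteq> 0" and y: "y0 \<noteq> 0 \<or> y1 \<noteq> 0"
    and u: "u0 \<noteq> 0 \<or> u1 \<noteq> 0" and v: "v0 \<noteq> 0 \<or> v1 \<noteq> 0"
    and e0: "u0*v0^2 = c*(x0*y0^2)"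
    and e1: "u1*v0^2 + 2*u0*v0*v1 = c*(x1*y0^2 + 2*x0*y0*y1)"
    and e2: "2*u1*v0*v1 + u0*v1^2 = c*(2*x1*y0*y1 + x0*y1^2)"
    and e3: "u1*v1^2 = c*(x1*y1^2)"
  shows "(\<exists>k. k\<noteq>0 \<and> u0 = k*x0 \<and> u1 = k*x1) \<and> (\<exists>k. k\<noteq>0 \<and> v0 = k*y0 \<and> v1 = k*y1)"
proof -
  define m where "m = v0*y1 + v1*(-y0)"
  define l where "l = u0*y1 + u1*(-y0)"
  have h0: "m*(m*u0 + 2*l*v0) = 0"
  proof -
    have "m*(m*u0 + 2*l*v0) = 3*(u0*v0^2)*y1^2 - 2*(u1*v0^2 + 2*u0*v0*v1)*y1*y0 + (2*u1*v0*v1 + u0*v1^2)*y0^2"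
      unfolding m_def l_def by algebra
    also have "\<dots> = c*(3*(x0*y0^2)*y1^2 - 2*(x1*y0^2 + 2*x0*y0*y1)*y1*y0 + (2*x1*y0*y1 + x0*y1^2)*y0^2)"
      unfolding e0 e1 e2 by algebra
    also have "\<dots> = 0" by algebra
    finally show ?thesis .
  qed
  have h1: "m*(m*u1 + 2*l*v1) = 0"
  proof -
    have "m*(m*u1 + 2*l*v1) = (u1*v0^2 + 2*u0*v0*v1)*y1^2 - 2*(2*u1*v0*v1 + u0*v1^2)*y1*y0 + 3*(u1*v1^2)*y0^2"
      unfolding m_def l_def by algebra
    also have "\<dots> = c*((x1*y0^2 + 2*x0*y0*y1)*y1^2 - 2*(2*x1*y0*y1 + x0*y1^2)*y1*y0 + 3*(x1*y1^2)*y0^2)"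
      unfolding e1 e2 e3 by algebra
    also have "\<dots> = 0" by algebra
    finally show ?thesis .
  qed
  have "m = 0" using grad_zero2[OF m_def l_def h0 h1 u] .
  then have cr: "v0*y1 = v1*y0" unfolding m_def by (simp add: algebra_simps)
  obtain k where k: "k \<noteq> 0" "v0 = k*y0" "v1 = k*y1"
  proof (cases "y0 = 0")
    case True
    then have "y1 \<noteq> 0" using y by simp
    then show ?thesis using True cr v by (intro that[of "v1/y1"]) (auto simp: field_simps)
  next
    case False
    then show ?thesis using cr v by (intro that[of "v0/y0"]) (auto simp: field_simps)
  qed
  define d where "d = c/k^2"
  have kk: "k^2 \<noteq> 0" using k by simp
  have z: "(u0 - d*x0) = 0 \<and> (u1 - d*x1) = 0"
  proof (rule P1_null[OF _ _ _ _ y])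
    show "(u0 - d * x0) * y0\<^sup>2 = 0" using e0 kk unfolding k d_def by (simp add: field_simps)
  next
    have e1': "k^2*(u1*y0^2 + 2*u0*y0*y1) = c*(x1*y0^2 + 2*x0*y0*y1)" using e1 unfolding k by algebra
    have "(u1 - d*x1)*y0^2 + 2*(u0 - d*x0)*y0*y1 = (k^2*(u1*y0^2 + 2*u0*y0*y1) - c*(x1*y0^2 + 2*x0*y0*y1))/k^2"
      using kk unfolding d_def by (simp add: field_simps)
    then show "(u1 - d*x1)*y0^2 + 2*(u0 - d*x0)*y0*y1 = 0" using e1' by simp
  next
    have e2': "k^2*(2*u1*y0*y1 + u0*y1^2) = c*(2*x1*y0*y1 + x0*y1^2)" using e2 unfolding k by algebra
    have "2*(u1 - d*x1)*y0*y1 + (u0 - d*x0)*y1^2 = (k^2*(2*u1*y0*y1 + u0*y1^2) - c*(2*x1*y0*y1 + x0*y1^2))/k^2"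
      using kk unfolding d_def by (simp add: field_simps)
    then show "2*(u1 - d*x1)*y0*y1 + (u0 - d*x0)*y1^2 = 0" using e2' by simp
  next
    show "(u1 - d*x1)*y1^2 = 0" using e3 kk unfolding k d_def by (simp add: field_simps)
  qed
  have "d \<noteq> 0" using c k unfolding d_def by simp
  then show ?thesis using z k by auto
qed

definition lin :: "(nat\<Rightarrow>complex) \<Rightarrow> (nat\<Rightarrow>complex) \<Rightarrow> complex" where
  "lin v p = v 0 * p 0 + v 1 * p 1 + v 2 * p 2"

definition C2 :: "(nat\<Rightarrow>complex) \<Rightarrow> (nat\<Rightarrow>complex) \<Rightarrow> nat \<Rightarrow> complex" where
  "C2 x y k = [x 0 * y 0^2, x 1 * y 1^2, x 2 * y 2^2,
     x 0 * y 1^2 + 2*x 1*y 0*y 1, x 1*y 2^2 + 2*x 2*y 1*y 2, x 2*y 0^2 + 2*x 0*y 0*y 2,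
     2*x 0*y 1*y 2 + 2*x 1*y 0*y 2 + 2*x 2*y 0*y 1,
     x 1*y 0^2 + 2*x 0*y 0*y 1, x 2*y 1^2 + 2*x 1*y 1*y 2, x 0*y 2^2 + 2*x 2*y 0*y 2] ! k"

definition G :: "(nat\<Rightarrow>complex) \<Rightarrow> (nat\<Rightarrow>complex) \<Rightarrow> nat \<Rightarrow> complex" where
  "G a p j = [3*a 0*p 0^2 + a 3*p 1^2 + 2*a 5*p 0*p 2 + a 6*p 1*p 2 + 2*a 7*p 0*p 1 + a 9*p 2^2,
     3*a 1*p 1^2 + 2*a 3*p 0*p 1 + a 4*p 2^2 + a 6*p 0*p 2 + a 7*p 0^2 + 2*a 8*p 1*p 2,
     3*a 2*p 2^2 + 2*a 4*p 1*p 2 + a 5*p 0^2 + a 6*p 0*p 1 + a 8*p 1^2 + 2*a 9*p 0*p 2] ! j"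

definition KG :: "(nat\<Rightarrow>complex) \<Rightarrow> nat \<Rightarrow> complex" where
  "KG p j = [2*p 0*p 1 + p 2^2, p 0^2 + 2*p 1*p 2, p 1^2 + 2*p 0*p 2] ! j"

definition cr :: "(nat\<Rightarrow>complex) \<Rightarrow> (nat\<Rightarrow>complex) \<Rightarrow> nat \<Rightarrow> complex" where
  "cr y q i = [y 1*q 2 - y 2*q 1, y 2*q 0 - y 0*q 2, y 0*q 1 - y 1*q 0] ! i"

lemma lt3: "j < (3::nat) \<longleftrightarrow> j = 0 \<or> j = 1 \<or> j = 2" by auto
lemma lt10: "k < (10::nat) \<longleftrightarrow> k = 0 \<or> k = 1 \<or> k = 2 \<or> k = 3 \<or> k = 4 \<or> k = 5 \<or> k = 6 \<or> k = 7 \<or> k = 8 \<or> k = 9" by auto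

lemma G_C2: assumes "j < 3" shows "G (C2 x y) p j = lin y p * (lin y p * x j + 2 * lin x p * y j)"
proof -
  have "G (C2 x y) p 0 = lin y p * (lin y p * x 0 + 2 * lin x p * y 0)"
    unfolding G_def C2_def lin_def by simp algebra
  moreover have "G (C2 x y) p 1 = lin y p * (lin y p * x 1 + 2 * lin x p * y 1)"
    unfolding G_def C2_def lin_def by simp algebra
  moreover have "G (C2 x y) p 2 = lin y p * (lin y p * x 2 + 2 * lin x p * y 2)"
    unfolding G_def C2_def lin_def by simp algebra
  ultimately show ?thesis using assms unfolding lt3 by auto
qed

lemma G_lin: "j < 3 \<Longrightarrow> G (\<lambda>k. a k - c * b k) p j = G a p j - c * G b p j"
  unfolding lt3 by (elim disjE) (simp_all add: G_def algebra_simps)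

lemma G_t: "a 0 = 0 \<Longrightarrow> a 1 = 0 \<Longrightarrow> a 2 = 0 \<Longrightarrow> a 3 = 0 \<Longrightarrow> a 4 = 0 \<Longrightarrow> a 5 = 0 \<Longrightarrow> a 6 = 0
  \<Longrightarrow> a 7 = t \<Longrightarrow> a 8 = t \<Longrightarrow> a 9 = t \<Longrightarrow> j < 3 \<Longrightarrow> G a p j = t * KG p j"
  unfolding lt3 by (elim disjE) (simp_all add: G_def KG_def algebra_simps)

lemma G_scale: "(\<And>k. k < 10 \<Longrightarrow> a k = c * b k) \<Longrightarrow> j < 3 \<Longrightarrow> G a p j = c * G b p j"
  unfolding lt3 lt10 by (elim disjE) (simp_all add: G_def algebra_simps)

lemma klein: assumes "\<And>j. j < 3 \<Longrightarrow> KG p j = 0" shows "p 0 = 0 \<and> p 1 = 0 \<and> p 2 = 0"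
proof -
  have E0: "2*p 0*p 1 + p 2^2 = 0" using assms[of 0] by (simp add: KG_def)
  have E1: "p 0^2 + 2*p 1*p 2 = 0" using assms[of 1] by (simp add: KG_def)
  have E2: "p 1^2 + 2*p 0*p 2 = 0" using assms[of 2] by (simp add: KG_def)
  have "9*p 0^4 = 0" using E0 E1 E2 by algebra
  moreover have "9*p 1^4 = 0" using E0 E1 E2 by algebra
  moreover have "9*p 2^4 = 0" using E0 E1 E2 by algebra
  ultimately show ?thesis by simp
qed

lemma null2: assumes "\<And>k. k < 10 \<Longrightarrow> C2 z y k = 0" "y 0 \<noteq> 0 \<or> y 1 \<noteq> 0 \<or> y 2 \<noteq> 0"
  shows "z 0 = 0 \<and> z 1 = 0 \<and> z 2 = 0"
proof -
  have h: "z 0 * y 0^2 = 0" "z 1 * y 1^2 = 0" "z 2 * y 2^2 = 0"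
     "z 0 * y 1^2 + 2*z 1*y 0*y 1 = 0" "z 1*y 2^2 + 2*z 2*y 1*y 2 = 0" "z 2*y 0^2 + 2*z 0*y 0*y 2 = 0"
     "z 1*y 0^2 + 2*z 0*y 0*y 1 = 0" "z 2*y 1^2 + 2*z 1*y 1*y 2 = 0" "z 0*y 2^2 + 2*z 2*y 0*y 2 = 0"
    using assms(1)[of 0] assms(1)[of 1] assms(1)[of 2] assms(1)[of 3] assms(1)[of 4] assms(1)[of 5]
      assms(1)[of 7] assms(1)[of 8] assms(1)[of 9] by (simp_all add: C2_def)
  show ?thesis using assms(2) h by auto
qed

lemma grad_zero3: assumes "\<And>j. j < 3 \<Longrightarrow> lin y p * (lin y p * x j + 2 * lin x p * y j) = 0"
  "x 0 \<noteq> 0 \<or> x 1 \<noteq> 0 \<or> x 2 \<noteq> 0" shows "lin y p = 0"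
proof (rule ccontr)
  assume m: "lin y p \<noteq> 0"
  have e: "lin y p * x j + 2 * lin x p * y j = 0" if "j < 3" for j using assms(1)[OF that] m by simp
  have "3 * lin x p * lin y p = p 0 * (lin y p * x 0 + 2 * lin x p * y 0) + p 1 * (lin y p * x 1 + 2 * lin x p * y 1)
     + p 2 * (lin y p * x 2 + 2 * lin x p * y 2)" unfolding lin_def by algebra
  then have "lin x p = 0" using e[of 0] e[of 1] e[of 2] m by simp
  then show False using e[of 0] e[of 1] e[of 2] m assms(2) by simp
qed

lemma lin_cr_self: "lin y (cr y q) = 0" unfolding lin_def cr_def by (simp add: algebra_simps)
lemma lin_cr_triple: "lin y' (cr y q) = lin q (cr y' y)" unfolding lin_def cr_def by (simp add: algebra_simps)

lemma exists_p: assumes "y 0 \<noteq> 0 \<or> y 1 \<noteq> 0 \<or> y 2 \<noteq> 0"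
  obtains p where "p 0 \<noteq> 0 \<or> p 1 \<noteq> 0 \<or> p 2 \<noteq> 0" "lin y p = 0" "lin y' p = 0"
proof (cases "cr y' y 0 \<noteq> 0 \<or> cr y' y 1 \<noteq> 0 \<or> cr y' y 2 \<noteq> 0")
  case True
  show ?thesis
  proof (rule that[of "cr y' y"])
    show "lin y (cr y' y) = 0" using lin_cr_triple[of y y' y] lin_cr_self[of y] by simp
  qed (use True lin_cr_self in auto)
next
  case False
  then have z: "lin q (cr y' y) = 0" for q unfolding lin_def by simp
  have ly': "lin y' (cr y q) = 0" for q using lin_cr_triple[of y' y q] z by simp
  show ?thesis
  proof (cases "y 1 \<noteq> 0 \<or> y 2 \<noteq> 0")
    case True
    show ?thesis
      by (rule that[of "cr y (\<lambda>i. if i = 0 then 1 else 0)"]) (use True lin_cr_self ly' in \<open>auto simp: cr_def\<close>)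
  next
    case False
    then have "y 0 \<noteq> 0" using assms by auto
    then show ?thesis
      by (rule_tac that[of "cr y (\<lambda>i. if i = 1 then 1 else 0)"]) (use lin_cr_self ly' in \<open>auto simp: cr_def\<close>)
  qed
qed

lemma P2_t0: assumes h: "\<forall>i\<le>8. mapP2 i x' y' = c * mapP2 i x y"
  and y: "y 0 \<noteq> 0 \<or> y 1 \<noteq> 0 \<or> y 2 \<noteq> 0" and y': "y' 0 \<noteq> 0 \<or> y' 1 \<noteq> 0 \<or> y' 2 \<noteq> 0"
  shows "\<forall>k<10. C2 x' y' k = c * C2 x y k"
proof -
  define D where "D k = C2 x' y' k - c * C2 x y k" for k
  define t where "t = D 7"
  have D06: "D 0 = 0" "D 1 = 0" "D 2 = 0" "D 3 = 0" "D 4 = 0" "D 5 = 0" "D 6 = 0"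
    using h[rule_format, of 0] h[rule_format, of 1] h[rule_format, of 2] h[rule_format, of 3]
      h[rule_format, of 4] h[rule_format, of 5] h[rule_format, of 6]
    unfolding D_def by (simp_all add: C2_def mapP2_def)
  have h7: "mapP2 7 x' y' = c * mapP2 7 x y" and h8: "mapP2 8 x' y' = c * mapP2 8 x y" using h by auto
  have D8: "D 8 = t" using h7 unfolding t_def D_def by (simp add: C2_def mapP2_def algebra_simps)
  have D9: "D 9 = t" using h8 unfolding t_def D_def by (simp add: C2_def mapP2_def algebra_simps)
  obtain p where p: "p 0 \<noteq> 0 \<or> p 1 \<noteq> 0 \<or> p 2 \<noteq> 0" "lin y p = 0" "lin y' p = 0"
    using exists_p[OF y] by blast
  have "t * KG p j = 0" if j: "j < 3" for j
  proof -
    have "t * KG p j = G D p j" using G_t[OF D06 t_def[symmetric] D8 D9 j] by simp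
    also have "\<dots> = G (C2 x' y') p j - c * G (C2 x y) p j" unfolding D_def using G_lin[OF j] by simp
    also have "\<dots> = 0" using G_C2[OF j] p by simp
    finally show ?thesis .
  qed
  then have "t = 0" using klein[of p] p(1) by auto
  then show ?thesis using D06 D8 D9 t_def unfolding D_def lt10 by auto
qed

lemma ratio: fixes a b c d :: complex assumes "a \<noteq> 0" "b * a = d * c" shows "b = d / a * c"
proof -
  have "d / a * c = (d * c) / a" by simp
  also have "\<dots> = (b * a) / a" using assms(2) by simp
  also have "\<dots> = b" using assms(1) by simp
  finally show ?thesis by simp
qed

lemma P2_inj: assumes h: "\<forall>k<10. C2 x' y' k = c * C2 x y k" and c: "c \<noteq> 0"
  and x': "x' 0 \<noteq> 0 \<or> x' 1 \<noteq> 0 \<or> x' 2 \<noteq> 0"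
  and y: "y 0 \<noteq> 0 \<or> y 1 \<noteq> 0 \<or> y 2 \<noteq> 0" and y': "y' 0 \<noteq> 0 \<or> y' 1 \<noteq> 0 \<or> y' 2 \<noteq> 0"
  shows "(\<exists>k. k \<noteq> 0 \<and> (\<forall>i<3. x' i = k * x i)) \<and> (\<exists>k. k \<noteq> 0 \<and> (\<forall>i<3. y' i = k * y i))"
proof -
  have key: "lin y' p = 0" if "lin y p = 0" for p
  proof (rule grad_zero3[OF _ x'])
    fix j :: nat assume j: "j < 3"
    have "lin y' p * (lin y' p * x' j + 2 * lin x' p * y' j) = G (C2 x' y') p j" using G_C2[OF j] by simp
    also have "\<dots> = c * G (C2 x y) p j" using h by (intro G_scale[OF _ j]) auto
    also have "\<dots> = 0" using G_C2[OF j] that by simp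
    finally show "lin y' p * (lin y' p * x' j + 2 * lin x' p * y' j) = 0" .
  qed
  have cz: "cr y' y i = 0" if i3: "i < 3" for i
  proof -
    have "lin y' (cr y (\<lambda>k. if k = i then 1 else 0)) = 0" using key[OF lin_cr_self] .
    then have "lin (\<lambda>k. if k = i then 1 else 0) (cr y' y) = 0" using lin_cr_triple[of y' y "\<lambda>k. if k = i then 1 else 0"] by simp
    then show ?thesis unfolding lin_def using i3 unfolding lt3 by auto
  qed
  have c0: "y' 1*y 2 = y' 2*y 1" and c1: "y' 2*y 0 = y' 0*y 2" and c2: "y' 0*y 1 = y' 1*y 0"
    using cz[of 0] cz[of 1] cz[of 2] by (simp_all add: cr_def)
  have allc: "y' i * y j = y' j * y i" if "i<3" "j<3" for i j
    using that unfolding lt3 by (elim disjE) (metis c0 c1 c2 mult.commute)+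
  have "\<exists>j. j < 3 \<and> y j \<noteq> 0"
    using y
  proof (elim disjE)
    assume "y 0 \<noteq> 0" then show ?thesis by (intro exI[of _ "0::nat"]) simp
  next
    assume "y 1 \<noteq> 0" then show ?thesis by (intro exI[of _ "1::nat"]) simp
  next
    assume "y 2 \<noteq> 0" then show ?thesis by (intro exI[of _ "2::nat"]) simp
  qed
  then obtain j where j: "j < 3" "y j \<noteq> 0" by blast
  define mu where "mu = y' j / y j"
  have mu2: "y' i = mu * y i" if "i < 3" for i
    unfolding mu_def by (rule ratio[OF j(2) allc[OF that j(1)]])
  have mu1: "mu \<noteq> 0"
  proof
    assume "mu = 0"
    then have "y' 0 = 0" "y' 1 = 0" "y' 2 = 0" using mu2[of 0] mu2[of 1] mu2[of 2] by auto
    then show False using y' by auto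
  qed
  note mu = mu1 mu2
  define d where "d = c / mu^2"
  have mm: "mu^2 \<noteq> 0" using mu by simp
  have sc: "C2 x' y' k = mu^2 * C2 x' y k" if "k < 10" for k
    using that mu(2)[of 0] mu(2)[of 1] mu(2)[of 2] unfolding lt10
    by (elim disjE) (simp_all add: C2_def power_mult_distrib power2_eq_square algebra_simps)
  have lin1: "C2 (\<lambda>i. x' i - d * x i) y k = C2 x' y k - d * C2 x y k" if "k < 10" for k
    using that unfolding lt10 by (elim disjE) (simp_all add: C2_def algebra_simps)
  have "C2 (\<lambda>i. x' i - d * x i) y k = 0" if k: "k < 10" for k
  proof -
    have "mu^2 * C2 x' y k = c * C2 x y k" using h k sc[OF k] by metis
    then have "C2 x' y k = d * C2 x y k" using mm unfolding d_def by (simp add: field_simps)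
    then show ?thesis using lin1[OF k] by simp
  qed
  then have "(\<lambda>i. x' i - d * x i) 0 = 0 \<and> (\<lambda>i. x' i - d * x i) 1 = 0 \<and> (\<lambda>i. x' i - d * x i) 2 = 0"
    by (rule null2[OF _ y])
  then have "x' 0 - d * x 0 = 0 \<and> x' 1 - d * x 1 = 0 \<and> x' 2 - d * x 2 = 0" by simp
  moreover have "d \<noteq> 0" using c mm unfolding d_def by simp
  ultimately show ?thesis using mu unfolding lt3 by auto
qed

definition ev :: "nat \<Rightarrow> nat \<Rightarrow> complex" where "ev a = (\<lambda>i. if i = a then 1 else 0)"

definition cf :: "((nat \<Rightarrow> complex) \<Rightarrow> (nat \<Rightarrow> complex) \<Rightarrow> complex) \<Rightarrow> nat \<Rightarrow> nat \<Rightarrow> nat \<Rightarrow> complex" where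
  "cf f a j k = (if j = k then f (ev a) (ev j) else if j < k then
      f (ev a) (\<lambda>i. ev j i + ev k i) - f (ev a) (ev j) - f (ev a) (ev k) else 0)"

lemma sum2: "(\<Sum>i\<le>(2::nat). g i) = g 0 + g 1 + (g 2 :: complex)"
  by (simp add: numeral_2_eq_2 atMost_Suc add.commute add.left_commute)
lemma sum1: "(\<Sum>i\<le>(1::nat). g i) = g 0 + (g 1 :: complex)"
  by (simp add: atMost_Suc add.commute)

lemma form12_P1: "i \<le> 3 \<Longrightarrow> form12 1 (mapP1 i)"
  unfolding form12_def
  apply (rule exI[of _ "cf (mapP1 i)"])
  apply (simp only: sum1)
  apply (simp add: cf_def ev_def)
  apply (auto simp: le_Suc_eq numeral_3_eq_3 mapP1_def algebra_simps power2_eq_square)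
  done

lemma form12_P2: "i \<le> 8 \<Longrightarrow> form12 2 (mapP2 i)"
  unfolding form12_def
  apply (rule exI[of _ "cf (mapP2 i)"])
  apply (simp only: sum2)
  apply (simp add: cf_def ev_def)
  apply (auto simp: le_Suc_eq numeral_eq_Suc mapP2_def algebra_simps power2_eq_square)
  done

lemma sum3: "(\<Sum>i\<le>(3::nat). g i) = g 0 + g 1 + g 2 + (g 3 :: complex)"
  by (simp add: numeral_3_eq_3 numeral_2_eq_2 atMost_Suc add.commute add.left_commute)

lemma indep_P1: "lin_indep_forms 3 mapP1"
  unfolding lin_indep_forms_def
proof (rule allI, rule impI)
  fix a :: "nat \<Rightarrow> complex" assume h: "\<forall>x y. (\<Sum>i\<le>3. a i * mapP1 i x y) = 0"
  have "a 0 = 0" using h[rule_format, of "ev 0" "ev 0"] by (simp add: sum3 mapP1_def ev_def)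
  moreover have "a 3 = 0" using h[rule_format, of "ev 1" "ev 1"] by (simp add: sum3 mapP1_def ev_def)
  moreover have "a 1 = 0" using h[rule_format, of "ev 1" "ev 0"] by (simp add: sum3 mapP1_def ev_def)
  moreover have "a 2 = 0" using h[rule_format, of "ev 0" "ev 1"] by (simp add: sum3 mapP1_def ev_def)
  ultimately show "\<forall>i\<le>3. a i = 0" by (auto simp: le_Suc_eq numeral_3_eq_3 numeral_2_eq_2)
qed

lemma sum8: "(\<Sum>i\<le>(8::nat). g i) = g 0 + g 1 + g 2 + g 3 + g 4 + g 5 + g 6 + g 7 + (g 8 :: complex)"
  by (simp add: numeral_eq_Suc atMost_Suc add.commute add.left_commute)

lemma indep_P2: "lin_indep_forms 8 mapP2"
  unfolding lin_indep_forms_def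
proof (rule allI, rule impI)
  fix a :: "nat \<Rightarrow> complex" assume h: "\<forall>x y. (\<Sum>i\<le>8. a i * mapP2 i x y) = 0"
  have "a 0 = 0" using h[rule_format, of "ev 0" "ev 0"] by (simp add: sum8 mapP2_def ev_def)
  moreover have "a 1 = 0" using h[rule_format, of "ev 1" "ev 1"] by (simp add: sum8 mapP2_def ev_def)
  moreover have "a 2 = 0" using h[rule_format, of "ev 2" "ev 2"] by (simp add: sum8 mapP2_def ev_def)
  moreover have "a 3 = 0" using h[rule_format, of "ev 0" "ev 1"] by (simp add: sum8 mapP2_def ev_def)
  moreover have "a 4 = 0" using h[rule_format, of "ev 1" "ev 2"] by (simp add: sum8 mapP2_def ev_def)
  moreover have "a 5 = 0" using h[rule_format, of "ev 2" "ev 0"] by (simp add: sum8 mapP2_def ev_def)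
  moreover have e7: "a 7 = 0" using h[rule_format, of "ev 2" "ev 1"] by (simp add: sum8 mapP2_def ev_def)
  moreover have "a 8 = 0" using h[rule_format, of "ev 1" "ev 0"] e7 by (simp add: sum8 mapP2_def ev_def)
  moreover have "a 6 = 0" using h[rule_format, of "ev 0" "\<lambda>i. ev 1 i + ev 2 i"] calculation
    by (simp add: sum8 mapP2_def ev_def)
  ultimately show "\<forall>i\<le>8. a i = 0" by (auto simp: le_Suc_eq numeral_eq_Suc)
qed

lemma cvec_nz1: "x \<in> cvec 1 \<Longrightarrow> x 0 \<noteq> 0 \<or> x 1 \<noteq> 0"
  unfolding cvec_def by (auto simp: fun_eq_iff) (metis less_one not_less_eq nat_neq_iff)

lemma cvec_nz2: "x \<in> cvec 2 \<Longrightarrow> x 0 \<noteq> 0 \<or> x 1 \<noteq> 0 \<or> x 2 \<noteq> 0"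
proof -
  assume "x \<in> cvec 2"
  then have a: "\<forall>i>2. x i = 0" and b: "x \<noteq> (\<lambda>_. 0)" unfolding cvec_def by auto
  from b obtain i where "x i \<noteq> 0" by auto
  with a have "i \<le> 2" by (meson not_le)
  then have "i = 0 \<or> i = 1 \<or> i = 2" by auto
  with \<open>x i \<noteq> 0\<close> show ?thesis by auto
qed

lemma cvec_proj: assumes "x \<in> cvec n" "x' \<in> cvec n" "k \<noteq> 0" "\<forall>i\<le>n. x' i = k * x i"
  shows "proj_eq x x'"
  unfolding proj_eq_def
proof (intro exI conjI)
  show "k \<noteq> 0" by fact
  show "x' = (\<lambda>i. k * x i)"
  proof
    fix i show "x' i = k * x i"
      using assms unfolding cvec_def by (cases "i \<le> n") auto
  qed
qed

lemma ev_cvec1: "ev 0 \<in> cvec 1" "ev 1 \<in> cvec 1"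
  unfolding cvec_def ev_def by (auto simp: fun_eq_iff)

lemma inj_P1: "inj_morphism 1 3 mapP1"
  unfolding inj_morphism_def
proof (intro conjI ballI allI impI)
  fix x y assume x: "x \<in> cvec 1" and y: "y \<in> cvec 1"
  show "\<exists>i\<le>3. mapP1 i x y \<noteq> 0"
  proof (rule ccontr)
    assume "\<not> (\<exists>i\<le>3. mapP1 i x y \<noteq> 0)"
    then have h: "mapP1 i x y = 0" if "i \<le> 3" for i using that by auto
    have a0: "x 0 * y 0^2 = 0" using h[of 0] unfolding mapP1_def by simp
    have a1: "x 1 * y 0^2 + 2 * x 0 * y 0 * y 1 = 0" using h[of 1] unfolding mapP1_def by simp
    have a2: "2 * x 1 * y 0 * y 1 + x 0 * y 1^2 = 0" using h[of 2] unfolding mapP1_def by (simp add: numeral_2_eq_2)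
    have a3: "x 1 * y 1^2 = 0" using h[of 3] unfolding mapP1_def by (simp add: numeral_3_eq_3)
    have "x 0 = 0 \<and> x 1 = 0" by (rule P1_null[OF a0 a1 a2 a3 cvec_nz1[OF y]])
    then show False using cvec_nz1[OF x] by simp
  qed
next
  fix x y x' y' assume x: "x \<in> cvec 1" and y: "y \<in> cvec 1" and x': "x' \<in> cvec 1" and y': "y' \<in> cvec 1"
  assume "\<exists>c. c \<noteq> 0 \<and> (\<forall>i\<le>3. mapP1 i x' y' = c * mapP1 i x y)"
  then obtain c where c: "c \<noteq> 0" and h: "\<And>i. i \<le> 3 \<Longrightarrow> mapP1 i x' y' = c * mapP1 i x y" by auto
  have e0: "x' 0*y' 0^2 = c*(x 0*y 0^2)" using h[of 0] by (simp add: mapP1_def)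
  have e1: "x' 1*y' 0^2 + 2*x' 0*y' 0*y' 1 = c*(x 1*y 0^2 + 2*x 0*y 0*y 1)" using h[of 1] by (simp add: mapP1_def)
  have e2: "2*x' 1*y' 0*y' 1 + x' 0*y' 1^2 = c*(2*x 1*y 0*y 1 + x 0*y 1^2)" using h[of 2] by (simp add: mapP1_def numeral_2_eq_2)
  have e3: "x' 1*y' 1^2 = c*(x 1*y 1^2)" using h[of 3] by (simp add: mapP1_def numeral_3_eq_3)
  from P1_main[OF c cvec_nz1[OF x] cvec_nz1[OF y] cvec_nz1[OF x'] cvec_nz1[OF y'] e0 e1 e2 e3]
  obtain k1 k2 where k1: "k1 \<noteq> 0" "x' 0 = k1 * x 0" "x' 1 = k1 * x 1"
    and k2: "k2 \<noteq> 0" "y' 0 = k2 * y 0" "y' 1 = k2 * y 1" by blast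
  have le1: "i \<le> 1 \<Longrightarrow> i = 0 \<or> i = 1" for i :: nat by auto
  have "\<forall>i\<le>1. x' i = k1 * x i" using k1 le1 by auto
  then have A: "proj_eq x x'" by (rule cvec_proj[OF x x' k1(1)])
  have "\<forall>i\<le>1. y' i = k2 * y i" using k2 le1 by auto
  then have B: "proj_eq y y'" by (rule cvec_proj[OF y y' k2(1)])
  show "proj_eq x x'" by (rule A)
  show "proj_eq y y'" by (rule B)
qed

lemma inj_P2: "inj_morphism 2 8 mapP2"
  unfolding inj_morphism_def
proof (intro conjI ballI allI impI)
  fix x y assume x: "x \<in> cvec 2" and y: "y \<in> cvec 2"
  show "\<exists>i\<le>8. mapP2 i x y \<noteq> 0"
  proof (rule ccontr)
    assume "\<not> (\<exists>i\<le>8. mapP2 i x y \<noteq> 0)"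
    then have "\<forall>i\<le>8. mapP2 i x y = 0 * mapP2 i x y" by auto
    from P2_t0[OF this cvec_nz2[OF y] cvec_nz2[OF y]]
    have "\<And>k. k < 10 \<Longrightarrow> C2 x y k = 0" by simp
    from null2[OF this cvec_nz2[OF y]] show False using cvec_nz2[OF x] by simp
  qed
next
  fix x y x' y' assume x: "x \<in> cvec 2" and y: "y \<in> cvec 2" and x': "x' \<in> cvec 2" and y': "y' \<in> cvec 2"
  assume "\<exists>c. c \<noteq> 0 \<and> (\<forall>i\<le>8. mapP2 i x' y' = c * mapP2 i x y)"
  then obtain c where c: "c \<noteq> 0" and h: "\<forall>i\<le>8. mapP2 i x' y' = c * mapP2 i x y" by auto
  from P2_inj[OF P2_t0[OF h cvec_nz2[OF y] cvec_nz2[OF y']] c cvec_nz2[OF x'] cvec_nz2[OF y] cvec_nz2[OF y']]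
  obtain k1 k2 where k1: "k1 \<noteq> 0" "\<forall>i<3. x' i = k1 * x i" and k2: "k2 \<noteq> 0" "\<forall>i<3. y' i = k2 * y i" by blast
  have le2: "i \<le> 2 \<longleftrightarrow> i < (3::nat)" for i by auto
  have "\<forall>i\<le>2. x' i = k1 * x i" using k1(2) le2 by auto
  then have A: "proj_eq x x'" by (rule cvec_proj[OF x x' k1(1)])
  have "\<forall>i\<le>2. y' i = k2 * y i" using k2(2) le2 by auto
  then have B: "proj_eq y y'" by (rule cvec_proj[OF y y' k2(1)])
  show "proj_eq x x'" by (rule A)
  show "proj_eq y y'" by (rule B)
qed

lemma form12_lin1: assumes "form12 1 f" shows "f x y = x 0 * f (ev 0) y + x 1 * f (ev 1) y"
proof -
  obtain c where c: "\<And>x y. f x y = (\<Sum>i\<le>1. \<Sum>j\<le>1. \<Sum>k\<le>1. c i j k * x i * y j * y k)"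
    using assms unfolding form12_def by blast
  show ?thesis unfolding c by (simp add: sum1 ev_def algebra_simps)
qed

lemma lower1: assumes F: "\<forall>i\<le>d. form12 1 (F i)" and inj: "inj_morphism 1 d F" shows "3 \<le> d"
proof (rule ccontr)
  assume "\<not> 3 \<le> d"
  then have d: "d \<le> 2" by simp
  define w where "w a b i = (if i \<le> d then F i (ev a) (ev b) else 0)" for a b i
  obtain p q r s where nz: "p\<noteq>0 \<or> q\<noteq>0 \<or> r\<noteq>0 \<or> s\<noteq>0"
    and E: "p*w 0 0 0+q*w 1 0 0+r*w 0 1 0+s*w 1 1 0 = 0"
      "p*w 0 0 1+q*w 1 0 1+r*w 0 1 1+s*w 1 1 1 = 0"
      "p*w 0 0 2+q*w 1 0 2+r*w 0 1 2+s*w 1 1 2 = 0"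
    using dep4_3 by blast
  have Ei: "p*w 0 0 i+q*w 1 0 i+r*w 0 1 i+s*w 1 1 i = 0" if "i \<le> 2" for i
  proof -
    have "i = 0 \<or> i = 1 \<or> i = 2" using that by auto
    then show ?thesis using E by (elim disjE) simp_all
  qed
  define X where "X = (\<lambda>i::nat. if i = 0 then p else if i = 1 then q else 0)"
  define X' where "X' = (\<lambda>i::nat. if i = 0 then -r else if i = 1 then -s else 0)"
  have FX: "F i X (ev 0) = p * F i (ev 0) (ev 0) + q * F i (ev 1) (ev 0)" if "i \<le> d" for i
    using form12_lin1[OF F[rule_format, OF that], of X "ev 0"] unfolding X_def by simp
  have FX': "F i X' (ev 1) = -(r * F i (ev 0) (ev 1) + s * F i (ev 1) (ev 1))" if "i \<le> d" for i
    using form12_lin1[OF F[rule_format, OF that], of X' "ev 1"] unfolding X'_def by simp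
  have eq: "F i X' (ev 1) = 1 * F i X (ev 0)" if "i \<le> d" for i
  proof -
    have "p * F i (ev 0) (ev 0) + q * F i (ev 1) (ev 0) + r * F i (ev 0) (ev 1) + s * F i (ev 1) (ev 1) = 0"
      using Ei[of i] that d unfolding w_def by simp
    then show ?thesis using FX[OF that] FX'[OF that] by algebra
  qed
  have nz1: "\<exists>i\<le>d. F i x y \<noteq> 0" if "x \<in> cvec 1" "y \<in> cvec 1" for x y
    using inj that unfolding inj_morphism_def by blast
  have cX: "X \<in> cvec 1" if "p \<noteq> 0 \<or> q \<noteq> 0" using that unfolding cvec_def X_def by (auto simp: fun_eq_iff)
  have cX': "X' \<in> cvec 1" if "r \<noteq> 0 \<or> s \<noteq> 0" using that unfolding cvec_def X'_def by (auto simp: fun_eq_iff)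
  consider "p = 0 \<and> q = 0" | "r = 0 \<and> s = 0" | "(p \<noteq> 0 \<or> q \<noteq> 0) \<and> (r \<noteq> 0 \<or> s \<noteq> 0)" by blast
  then show False
  proof cases
    case 1
    then have "X = (\<lambda>_. 0)" unfolding X_def by auto
    moreover have "F i (\<lambda>_. 0) (ev 0) = 0" if "i \<le> d" for i
      using form12_lin1[OF F[rule_format, OF that], of "\<lambda>_. 0" "ev 0"] by simp
    ultimately have "F i X' (ev 1) = 0" if "i \<le> d" for i using eq[OF that] that by simp
    then show False using nz1[OF cX' ev_cvec1(2)] 1 nz by auto
  next
    case 2
    then have "X' = (\<lambda>_. 0)" unfolding X'_def by auto
    moreover have "F i (\<lambda>_. 0) (ev 1) = 0" if "i \<le> d" for i
      using form12_lin1[OF F[rule_format, OF that], of "\<lambda>_. 0" "ev 1"] by simp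
    ultimately have "F i X (ev 0) = 0" if "i \<le> d" for i using eq[OF that] that by simp
    then show False using nz1[OF cX ev_cvec1(1)] 2 nz by auto
  next
    case 3
    have "\<exists>c. c \<noteq> 0 \<and> (\<forall>i\<le>d. F i X' (ev 1) = c * F i X (ev 0))"
      using eq by (intro exI[of _ 1]) auto
    then have "proj_eq (ev 0) (ev 1)"
      using inj cX cX' 3 ev_cvec1 unfolding inj_morphism_def by blast
    then obtain c where "ev 1 = (\<lambda>i. c * ev 0 i)" unfolding proj_eq_def by blast
    then have "ev 1 1 = c * ev 0 1" by meson
    then show False by (simp add: ev_def)
  qed
qed

theorem proposition4p2:
  shows "inj_morphism 1 3 mapP1 \<and> inj_morphism 2 8 mapP2 \<and>
         injdim_O12 1 = 3 \<and> injdim_O12 2 \<le> 8"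
proof (intro conjI)
  show "inj_morphism 1 3 mapP1" by (rule inj_P1)
  show "inj_morphism 2 8 mapP2" by (rule inj_P2)
  show "injdim_O12 1 = 3" unfolding injdim_O12_def
  proof (rule cInf_eq_minimum)
    show "3 \<in> {d. \<exists>F. (\<forall>i\<le>d. form12 1 (F i)) \<and> lin_indep_forms d F \<and> inj_morphism 1 d F}"
      using form12_P1 indep_P1 inj_P1 by blast
    fix d assume "d \<in> {d. \<exists>F. (\<forall>i\<le>d. form12 1 (F i)) \<and> lin_indep_forms d F \<and> inj_morphism 1 d F}"
    then show "3 \<le> d" using lower1 by blast
  qed
  show "injdim_O12 2 \<le> 8" unfolding injdim_O12_def
    by (rule cInf_lower) (use form12_P2 indep_P2 inj_P2 in auto)
qed

end
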